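(* Let $X=\{\ell,r,s\}$ be a te-set such that $\{\ell,r\}$ is a tu-set and $|\operatorname{supp}(z)|\geq2$ for all $z\in X$. Let $j\in\operatorname{supp}(r)\cap\operatorname{supp}(\ell)$, and let $r',s'$ be the rows of $X/(\ell,j)$ corresponding to $r$ and $s$ (where $(\ell,j)$ denotes the pivot at the row $\ell$ and column $j$). If $\operatorname{supp}(r')=\operatorname{supp}(s')$, then either $\{r,s\}$ or $\{\ell,r,s\}$ is a te-lace.
   Context: A set of vectors is identified with the matrix whose rows are these vectors; $\operatorname{supp}(x)$ is the set of nonzero coordinates of $x$. A matrix is totally equimodular if every set of linearly independent rows forms a matrix of full row rank whose nonzero maximal minors all have the same absolute value, and totally unimodular if all its square submatrices have determinant in $\{0,\pm1\}$. A linearly independent set of $\{0,\pm1\}$-vectors is a te-set if its matrix is totally equimodular, a tu-set if its matrix is totally unimodular, and a te-lace if it is a te-set, not a tu-set, and all its proper subsets are tu-sets. For a position $(i,j)$ with $A_i^j\neq0$, $A/(i,j)$ is obtained from $A$ by dividing row $i$ by $A_i^j$ and adding suitable multiples of this row to the other rows so that column $j$ becomes the $i$-th unit vector. *)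

theory Defs
  imports "HOL-Analysis.Analysis"
begin

text \<open>A finite set of vectors is identified with the matrix whose rows are its elements
  (row order only affects signs of minors, which are irrelevant below).\<close>

definition supp :: "real^'n \<Rightarrow> 'n set" where
  "supp x = {i. x $ i \<noteq> 0}"

definition pm01 :: "real^'n \<Rightarrow> bool" where
  "pm01 x \<longleftrightarrow> (\<forall>i. x $ i \<in> {-1, 0, 1})"

definition det_fun :: "nat \<Rightarrow> (nat \<Rightarrow> nat \<Rightarrow> real) \<Rightarrow> real" where
  "det_fun k M = (\<Sum>p | p permutes {..<k}. of_int (sign p) * (\<Prod>i<k. M i (p i)))"

definition minor :: "(real^'n) list \<Rightarrow> 'n list \<Rightarrow> real" where
  "minor rs cs = det_fun (length rs) (\<lambda>i k. (rs ! i) $ (cs ! k))"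

definition totally_unimodular :: "(real^'n) set \<Rightarrow> bool" where
  "totally_unimodular X \<longleftrightarrow>
     (\<forall>rs cs. distinct rs \<and> set rs \<subseteq> X \<and> distinct cs \<and> length cs = length rs
        \<longrightarrow> minor rs cs \<in> {-1, 0, 1})"

definition totally_equimodular :: "(real^'n) set \<Rightarrow> bool" where
  "totally_equimodular X \<longleftrightarrow>
     (\<forall>Y. Y \<subseteq> X \<and> independent Y \<longrightarrow>
        (\<forall>rs cs rs' cs'.
           distinct rs \<and> set rs = Y \<and> distinct cs \<and> length cs = length rs \<and>
           distinct rs' \<and> set rs' = Y \<and> distinct cs' \<and> length cs' = length rs' \<and>
           minor rs cs \<noteq> 0 \<and> minor rs' cs' \<noteq> 0
           \<longrightarrow> \<bar>minor rs cs\<bar> = \<bar>minor rs' cs'\<bar>))"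

definition te_set :: "(real^'n) set \<Rightarrow> bool" where
  "te_set X \<longleftrightarrow> independent X \<and> (\<forall>x\<in>X. pm01 x) \<and> totally_equimodular X"

definition tu_set :: "(real^'n) set \<Rightarrow> bool" where
  "tu_set X \<longleftrightarrow> independent X \<and> (\<forall>x\<in>X. pm01 x) \<and> totally_unimodular X"

definition te_lace :: "(real^'n) set \<Rightarrow> bool" where
  "te_lace X \<longleftrightarrow> te_set X \<and> \<not> tu_set X \<and> (\<forall>Y. Y \<subset> X \<longrightarrow> tu_set Y)"

text \<open>Row x after pivoting at (l, j): l_j is nonzero; the pivot row l is divided by l_j
  and x_j/l_j times l is subtracted from x so that column j becomes a unit vector.\<close>
definition pivot_row :: "real^'n \<Rightarrow> 'n \<Rightarrow> real^'n \<Rightarrow> real^'n" where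
  "pivot_row l j x = x - (x $ j / l $ j) *\<^sub>R l"

end

theory Submission
  imports Defs
begin

lemma lt3: "{..<3::nat} = insert 0 (insert 1 {2})" by auto
lemma lt2: "{..<2::nat} = insert 0 {1}" by auto

lemma det_fun_0: "det_fun 0 M = 1"
  by (simp add: det_fun_def)

lemma det_fun_1: "det_fun 1 M = M 0 0"
proof -
  have "{..<1::nat} = {0}" by auto
  then show ?thesis by (simp add: det_fun_def permutes_sing sign_id)
qed

lemma det_fun_2: "det_fun 2 M = M 0 0 * M 1 1 - M 0 1 * M 1 0"
proof -
  have f: "finite {1::nat}" "0 \<notin> {1::nat}" by auto
  show ?thesis
    unfolding det_fun_def lt2 sum_over_permutations_insert[OF f] permutes_sing
    by (simp add: sign_swap_id sign_id swap_id_eq lt2)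
qed

lemma det_fun_3: "det_fun 3 M =
    M 0 0 * M 1 1 * M 2 2 + M 0 1 * M 1 2 * M 2 0 + M 0 2 * M 1 0 * M 2 1
  - M 0 0 * M 1 2 * M 2 1 - M 0 1 * M 1 0 * M 2 2 - M 0 2 * M 1 1 * M 2 0"
proof -
  have f1: "finite {1::nat, 2}" "0 \<notin> {1::nat, 2}" by auto
  have f2: "finite {2::nat}" "1 \<notin> {2::nat}" by auto
  show ?thesis
    unfolding det_fun_def lt3 sum_over_permutations_insert[OF f1] sum_over_permutations_insert[OF f2] permutes_sing
    by (simp add: sign_swap_id permutation_swap_id sign_compose sign_id swap_id_eq lt3 algebra_simps)
qed

lemma minor_0: "minor [] [] = 1"
  by (simp add: minor_def det_fun_0)
lemma minor_1: "minor [x] [a] = x $ a"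
proof -
  have "length [x] = 1" by simp
  then show ?thesis unfolding minor_def by (simp only: det_fun_1) simp
qed
lemma minor_2: "minor [x, y] [a, b] = x$a * y$b - x$b * y$a"
proof -
  have "length [x, y] = 2" by simp
  then show ?thesis unfolding minor_def by (simp only: det_fun_2) simp
qed
lemma minor_3: "minor [x, y, z] [a, b, c] =
   x$a * y$b * z$c + x$b * y$c * z$a + x$c * y$a * z$b
 - x$a * y$c * z$b - x$b * y$a * z$c - x$c * y$b * z$a"
proof -
  have "length [x, y, z] = 3" by simp
  then show ?thesis unfolding minor_def by (simp only: det_fun_3) simp
qed

lemma pm01_entry: "pm01 x \<Longrightarrow> x $ i = -1 \<or> x $ i = 0 \<or> x $ i = 1"
  unfolding pm01_def by auto

lemma tu_mono: "tu_set X \<Longrightarrow> Y \<subseteq> X \<Longrightarrow> tu_set Y"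
  unfolding tu_set_def totally_unimodular_def
  using independent_mono by blast

lemma ball_sub_mono: "(\<forall>Z. Z \<subseteq> X \<and> Q Z \<longrightarrow> P Z) \<Longrightarrow> Y \<subseteq> X \<Longrightarrow> (\<forall>Z. Z \<subseteq> Y \<and> Q Z \<longrightarrow> P Z)"
  by blast

lemma te_mono: assumes "te_set X" "Y \<subseteq> X" shows "te_set Y"
proof -
  have "independent Y" "\<forall>x\<in>Y. pm01 x" using assms unfolding te_set_def
    using independent_mono by blast+
  moreover have "totally_equimodular Y"
    using assms(1) unfolding te_set_def totally_equimodular_def
    apply (elim conjE)
    apply (erule ball_sub_mono)
    by (rule assms(2))
  ultimately show ?thesis unfolding te_set_def by blast
qed

lemma minor_le1:
  assumes "distinct rs" "set rs \<subseteq> {x}" "pm01 x" "length cs = length rs"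
  shows "minor rs cs \<in> {-1, 0, 1}"
proof -
  have "length rs \<le> 1"
    using distinct_card[OF assms(1)] card_mono[OF _ assms(2)] by auto
  then consider "rs = []" | y where "rs = [y]"
    by (cases rs) auto
  then show ?thesis
  proof cases
    case 1 then show ?thesis using assms(4) by (simp add: minor_0)
  next
    case 2
    then have "y = x" using assms(2) by auto
    moreover obtain c where "cs = [c]" using assms(4) 2
      by (cases cs) auto
    ultimately show ?thesis using 2 pm01_entry[OF assms(3)] by (auto simp: minor_1)
  qed
qed

lemma tu_single: "independent {x} \<Longrightarrow> pm01 x \<Longrightarrow> tu_set {x}"
  unfolding tu_set_def totally_unimodular_def using minor_le1 by auto

lemma pivot_dep:
  assumes "l $ j \<noteq> 0" "pivot_row l j s = c *\<^sub>R pivot_row l j r"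
  shows "s \<in> span {l, r}"
proof -
  have "s = c *\<^sub>R r + (s $ j / l $ j - c * (r $ j / l $ j)) *\<^sub>R l"
    using assms(2) unfolding pivot_row_def
    by (simp add: algebra_simps)
  also have "\<dots> \<in> span {l, r}"
    by (intro span_add span_scale span_base) auto
  finally show ?thesis .
qed

lemma indep3_contra:
  assumes "independent {l, r, s}" "distinct [l, r, s]" "s \<in> span {l, r}"
  shows False
proof -
  have "{l, r, s} - {s} = {l, r}" using assms(2) by auto
  then have "dependent {l, r, s}"
    unfolding dependent_def using assms(3) by auto
  then show False using assms(1) by simp
qed


theorem mainTheorem8:
  fixes l r s :: "real^'n" and j :: 'n
  assumes "distinct [l, r, s]"
    and "te_set {l, r, s}"
    and "tu_set {l, r}"
    and "\<forall>z\<in>{l, r, s}. card (supp z) \<ge> 2"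
    and "j \<in> supp r \<inter> supp l"
    and "supp (pivot_row l j r) = supp (pivot_row l j s)"
  shows "te_lace {r, s} \<or> te_lace {l, r, s}"
proof -
  note dist = assms(1)
  have ind: "independent {l, r, s}" and pm: "pm01 l" "pm01 r" "pm01 s"
    using assms(2) unfolding te_set_def by auto
  define r' where "r' = pivot_row l j r"
  define s' where "s' = pivot_row l j s"
  have r'a: "r' $ a = r $ a - (r $ j / l $ j) * l $ a" for a
    unfolding r'_def pivot_row_def by simp
  have s'a: "s' $ a = s $ a - (s $ j / l $ j) * l $ a" for a
    unfolding s'_def pivot_row_def by simp
  have lj: "l $ j = 1 \<or> l $ j = -1" and rj: "r $ j = 1 \<or> r $ j = -1"
    using assms(5) pm01_entry[OF pm(1), of j] pm01_entry[OF pm(2), of j]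
    unfolding supp_def by auto
  have lj0: "l $ j \<noteq> 0" using lj by auto
  have sj: "s $ j = -1 \<or> s $ j = 0 \<or> s $ j = 1" using pm01_entry[OF pm(3)] .
  have r'j: "r' $ j = 0" and s'j: "s' $ j = 0" using lj0 by (simp_all add: r'a s'a)
  have Mlr: "minor [l, r] [j, a] = l $ j * r' $ a" for a
    using lj0 by (simp add: minor_2 r'a field_simps)
  have Mls: "minor [l, s] [j, a] = l $ j * s' $ a" for a
    using lj0 by (simp add: minor_2 s'a field_simps)
  have Mrs: "minor [r, s] [j, a] = r $ j * s' $ a - s $ j * r' $ a" for a
    using lj0 by (simp add: minor_2 s'a r'a field_simps)
  have Mlrs: "minor [l, r, s] [j, a, b] = l $ j * (r' $ a * s' $ b - r' $ b * s' $ a)" for a b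
    using lj0 by (simp add: minor_3 s'a r'a field_simps)
  have supp_eq: "r' $ a = 0 \<longleftrightarrow> s' $ a = 0" for a
  proof -
    have "a \<in> supp r' \<longleftrightarrow> a \<in> supp s'" using assms(6) r'_def s'_def by simp
    then show ?thesis unfolding supp_def by auto
  qed
  have tuI: "minor rs cs \<in> {-1, 0, 1}" if "tu_set X" "distinct rs" "set rs \<subseteq> X"
     "distinct cs" "length cs = length rs" for X rs cs
    using that unfolding tu_set_def totally_unimodular_def by blast
  have rv: "r' $ a = -1 \<or> r' $ a = 0 \<or> r' $ a = 1" for a
  proof (cases "a = j")
    case True then show ?thesis using r'j by simp
  next
    case False
    have "minor [l, r] [j, a] \<in> {-1, 0, 1}"
      using tuI[OF assms(3), of "[l, r]" "[j, a]"] dist False by auto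
    then show ?thesis using lj by (auto simp: Mlr)
  qed
  have sv: "s' $ a = -2 \<or> s' $ a = -1 \<or> s' $ a = 0 \<or> s' $ a = 1 \<or> s' $ a = 2" for a
    using lj sj pm01_entry[OF pm(3), of a] pm01_entry[OF pm(1), of a]
    unfolding s'a by (elim disjE; simp)
  have dep: False if "s' = c *\<^sub>R r'" for c
  proof -
    have "pivot_row l j s = c *\<^sub>R pivot_row l j r" using that r'_def s'_def by simp
    then show False by (rule indep3_contra[OF ind dist pivot_dep[OF lj0]])
  qed
  have notA: "\<not> tu_set {l, r, s}"
  proof
    assume tu3: "tu_set {l, r, s}"
    have sv1: "s' $ a = -1 \<or> s' $ a = 0 \<or> s' $ a = 1" for a
    proof (cases "a = j")
      case True then show ?thesis using s'j by simp
    next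
      case False
      have "minor [l, s] [j, a] \<in> {-1, 0, 1}"
        using tuI[OF tu3, of "[l, s]" "[j, a]"] dist False by auto
      then show ?thesis using lj by (auto simp: Mls)
    qed
    show False
    proof (cases "\<exists>a b. r' $ a * s' $ a = 1 \<and> r' $ b * s' $ b = -1")
      case True
      then obtain a b where ab: "r' $ a * s' $ a = 1" "r' $ b * s' $ b = -1" by blast
      have "a \<noteq> j" "b \<noteq> j" "a \<noteq> b" using ab r'j by auto
      then have "minor [l, r, s] [j, a, b] \<in> {-1, 0, 1}"
        using tuI[OF tu3, of "[l, r, s]" "[j, a, b]"] dist by auto
      moreover have "minor [l, r, s] [j, a, b] \<notin> {-1, 0, 1}"
        unfolding Mlrs using ab lj rv[of a] rv[of b] sv1[of a] sv1[of b] by (elim disjE; simp)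
      ultimately show False by blast
    next
      case False
      then have "(\<forall>a. r' $ a * s' $ a \<noteq> 1) \<or> (\<forall>b. r' $ b * s' $ b \<noteq> -1)" by blast
      then show False
      proof
        assume h: "\<forall>a. r' $ a * s' $ a \<noteq> 1"
        have "s' = (-1) *\<^sub>R r'"
        proof (subst vec_eq_iff, intro allI)
          fix a show "s' $ a = ((-1) *\<^sub>R r') $ a"
            using h[rule_format, of a] rv[of a] sv1[of a] supp_eq[of a] by (elim disjE; simp)
        qed
        then show False by (rule dep)
      next
        assume h: "\<forall>b. r' $ b * s' $ b \<noteq> -1"
        have "s' = 1 *\<^sub>R r'"
        proof (subst vec_eq_iff, intro allI)
          fix a show "s' $ a = (1 *\<^sub>R r') $ a"
            using h[rule_format, of a] rv[of a] sv1[of a] supp_eq[of a] by (elim disjE; simp)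
        qed
        then show False by (rule dep)
      qed
    qed
  qed
  have partB: "tu_set {l, s}" if turs: "tu_set {r, s}"
  proof (rule ccontr)
    assume ntu: "\<not> tu_set {l, s}"
    have indls: "independent {l, s}" using independent_mono[OF ind] by auto
    then have "\<not> totally_unimodular {l, s}" using ntu pm unfolding tu_set_def by auto
    then obtain rs cs where rc: "distinct rs" "set rs \<subseteq> {l, s}" "distinct cs"
      "length cs = length rs" "minor rs cs \<notin> {-1, 0, 1}"
      unfolding totally_unimodular_def by blast
    have "set rs = {l, s}"
    proof (rule ccontr)
      assume "set rs \<noteq> {l, s}"
      then have "set rs \<subseteq> {l} \<or> set rs \<subseteq> {s}" using rc(2) by auto
      then show False using minor_le1[OF rc(1) _ _ rc(4)] pm rc(5) by auto
    qed
    note rs = this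
    have teq: "totally_equimodular {l, s}"
      using te_mono[OF assms(2), of "{l, s}"] unfolding te_set_def by auto
    have eqabs: "\<bar>minor rs cs\<bar> = \<bar>minor [l, s] [j, a]\<bar>"
      if "a \<noteq> j" "minor [l, s] [j, a] \<noteq> 0" for a
    proof -
      have A: "{l, s} \<subseteq> {l, s} \<and> independent {l, s}" using indls by simp
      have B: "distinct rs \<and> set rs = {l, s} \<and> distinct cs \<and> length cs = length rs \<and>
           distinct [l, s] \<and> set [l, s] = {l, s} \<and> distinct [j, a] \<and> length [j, a] = length [l, s] \<and>
           minor rs cs \<noteq> 0 \<and> minor [l, s] [j, a] \<noteq> 0"
        using rc rs that dist by auto
      show ?thesis by (rule teq[unfolded totally_equimodular_def, rule_format, OF A B])
    qed
    have m1: "\<bar>minor rs cs\<bar> \<noteq> 1" using rc(5) by (auto simp: abs_if split: if_splits)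
    have sv2: "s' $ a = -2 \<or> s' $ a = 0 \<or> s' $ a = 2" for a
    proof (cases "a = j \<or> s' $ a = 0")
      case True then show ?thesis using s'j by auto
    next
      case False
      then have "\<bar>minor rs cs\<bar> = \<bar>l $ j * s' $ a\<bar>"
        using eqabs[of a] lj0 by (auto simp: Mls)
      then have "\<bar>s' $ a\<bar> \<noteq> 1" using m1 lj by (auto simp: abs_mult)
      then show ?thesis using sv[of a] by auto
    qed
    have "s' = (2 * r $ j * s $ j) *\<^sub>R r'"
    proof (subst vec_eq_iff, intro allI)
      fix a
      show "s' $ a = ((2 * r $ j * s $ j) *\<^sub>R r') $ a"
      proof (cases "a = j")
        case True then show ?thesis using r'j s'j by simp
      next
        case False
        have "minor [r, s] [j, a] \<in> {-1, 0, 1}"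
          using tuI[OF turs, of "[r, s]" "[j, a]"] dist False by auto
        then have "r $ j * s' $ a - s $ j * r' $ a \<in> {-1, 0, 1}" by (simp add: Mrs)
        then show ?thesis using rj sj rv[of a] sv2[of a] supp_eq[of a] by (elim disjE; simp)
      qed
    qed
    then show False by (rule dep)
  qed
  show ?thesis
  proof (cases "tu_set {r, s}")
    case True
    have "te_lace {l, r, s}"
      unfolding te_lace_def
    proof (intro conjI allI impI)
      show "te_set {l, r, s}" by (rule assms(2))
      show "\<not> tu_set {l, r, s}" by (rule notA)
      fix Y assume "Y \<subset> {l, r, s}"
      then have "Y \<subseteq> {l, r} \<or> Y \<subseteq> {l, s} \<or> Y \<subseteq> {r, s}" by blast
      then show "tu_set Y" using tu_mono assms(3) True partB[OF True] by blast
    qed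
    then show ?thesis by simp
  next
    case False
    have "te_lace {r, s}"
      unfolding te_lace_def
    proof (intro conjI allI impI)
      show "te_set {r, s}" using te_mono[OF assms(2)] by auto
      show "\<not> tu_set {r, s}" by (rule False)
      fix Y assume "Y \<subset> {r, s}"
      then have "Y \<subseteq> {r} \<or> Y \<subseteq> {s}" by blast
      moreover have "tu_set {r}" "tu_set {s}"
        using tu_single[OF independent_mono[OF ind], of r] tu_single[OF independent_mono[OF ind], of s] pm by auto
      ultimately show "tu_set Y" using tu_mono by blast
    qed
    then show ?thesis by simp
  qed
qed

end
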